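(* Let $n\ge4$, let $V$ be an inner product space over $\mathbb{K}\in\{\mathbb{R},\mathbb{C}\}$, let $x_1,\dots,x_n\in V$, and set $x_{n+1}=x_1$. For $1\le i<j\le n$ let $$c_{ij}=\sum_{r=0}^{2}(-1)^{r+1}\binom{n-j+i-1}{2-r}\binom{j-i-1}{r}.$$ Then $$\binom{n-2}{2}\sum_{i=1}^n\|x_i-x_{i+1}\|^2=\sum_{\substack{1\le i<j\le n\\ 1<j-i<n-1}}c_{ij}\|x_i-x_j\|^2+\sum_{1\le i<j<k<l\le n}\|x_i-x_j+x_k-x_l\|^2.$$
   Context: $\|v\|=\sqrt{(v,v)}$ denotes the norm induced by the inner product of $V$. Binomial coefficients $\binom{a}{b}$ are $0$ when $b>a$ or $b<0$. *)

theory Defs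
  imports "HOL-Analysis.Analysis"
begin

definition coef_c :: "nat \<Rightarrow> nat \<Rightarrow> nat \<Rightarrow> int" where
  "coef_c n i j = (\<Sum>r\<le>(2::nat). (-1) ^ (r + 1) * int ((n - j + i - 1) choose (2 - r))
                                        * int ((j - i - 1) choose r))"

end

theory Submission
  imports Defs
begin

lemma reindex:
  assumes "finite S" "finite T" "\<pi> ` S \<subseteq> T"
  shows "(\<Sum>s\<in>S. (f (\<pi> s)::real)) = (\<Sum>t\<in>T. real (card {s\<in>S. \<pi> s = t}) * f t)"
proof -
  have "(\<Sum>s\<in>S. f (\<pi> s)) = (\<Sum>t\<in>T. \<Sum>s\<in>{s\<in>S. \<pi> s = t}. f (\<pi> s))"
    using sum.group[OF assms, of "\<lambda>s. f (\<pi> s)"] by simp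
  also have "\<dots> = (\<Sum>t\<in>T. real (card {s\<in>S. \<pi> s = t}) * f t)"
    by (rule sum.cong) auto
  finally show ?thesis .
qed

lemma card_pairs: "card {(a,b). lo < a \<and> a < b \<and> b < (hi::nat)} = (hi - lo - 1) choose 2"
proof (induction hi)
  case 0
  then show ?case by simp
next
  case (Suc h)
  have e: "{(a,b). lo < a \<and> a < b \<and> b < Suc h} = {(a,b). lo < a \<and> a < b \<and> b < h} \<union> (\<lambda>a. (a,h)) ` {lo<..<h}"
    by auto
  have f: "finite {(a,b). lo < a \<and> a < b \<and> b < (h::nat)}"
    by (rule finite_subset[of _ "{..<h} \<times> {..<h}"]) auto
  have "card {(a,b). lo < a \<and> a < b \<and> b < Suc h} = ((h - lo - 1) choose 2) + (h - Suc lo)"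
    unfolding e using Suc f by (subst card_Un_disjoint) (auto simp: card_image inj_on_def)
  also have "\<dots> = (Suc h - lo - 1) choose 2"
  proof (cases "h > lo")
    case True
    then obtain m where "h - lo - 1 = m" "Suc h - lo - 1 = Suc m" "h - Suc lo = m" using True by (intro that[of "h - lo - 1"]) auto
    have "Suc m choose 2 = (m choose 2) + m" using binomial_Suc_Suc[of m 1] by (simp only: Suc_1 choose_one add.commute)
    then show ?thesis using \<open>h - lo - 1 = m\<close> \<open>Suc h - lo - 1 = Suc m\<close> \<open>h - Suc lo = m\<close> by simp
  qed auto
  finally show ?case .
qed

lemma real_choose2: "real (a choose 2) = real a * (real a - 1) / 2"
proof (induction a)
  case (Suc a)
  have "Suc a choose 2 = (a choose 2) + a" using binomial_Suc_Suc[of a 1] by (simp only: Suc_1 choose_one add.commute)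
  then show ?case using Suc by (simp add: field_simps)
qed simp

lemma norm4:
  fixes a b c d :: "'a::real_inner"
  shows "(norm (a - b + c - d))\<^sup>2 = (norm (a-b))\<^sup>2 + (norm (a-d))\<^sup>2 + (norm (b-c))\<^sup>2 + (norm (c-d))\<^sup>2
     - (norm (a-c))\<^sup>2 - (norm (b-d))\<^sup>2"
  by (simp add: power2_norm_eq_inner inner_diff_left inner_diff_right inner_add_left inner_add_right inner_commute algebra_simps)

lemma coef: "coef_c n i j = - int ((n - j + i - 1) choose 2) + int (n - j + i - 1) * int (j - i - 1) - int ((j - i - 1) choose 2)"
  unfolding coef_c_def by (simp add: numeral_2_eq_2)
lemma pointwise:
  fixes A B g :: nat
  assumes "A + B + g \<ge> 2"
  shows "real ((A+B+g+2 - 2) choose 2) * (if g = 0 \<or> (A = 0 \<and> B = 0) then 1 else 0)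
    = (if 0 < g \<and> 0 < A + B then real_of_int (- int ((A+B) choose 2) + int (A+B) * int g - int (g choose 2)) else 0)
      + (real (B choose 2) + real (A choose 2) + real (g choose 2) + real A * real B - real g * real B - real A * real g)"
  using assms by (auto simp: real_choose2 field_simps)

lemma quad_sum:
  fixes Dp :: "nat \<times> nat \<Rightarrow> real" and n :: nat
  defines "Q \<equiv> {(i, j, k, l). 1 \<le> i \<and> i < j \<and> j < k \<and> k < l \<and> l \<le> n}"
  and "P \<equiv> {(i, j). 1 \<le> i \<and> i < j \<and> j \<le> n}"
  shows "(\<Sum>(i,j,k,l)\<in>Q. Dp (i,j) + Dp (i,l) + Dp (j,k) + Dp (k,l) - Dp (i,k) - Dp (j,l))
    = (\<Sum>(p,q)\<in>P. (real ((n - q) choose 2) + real ((p - 1) choose 2) + real ((q - p - 1) choose 2)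
         + real (p - 1) * real (n - q) - real (q - p - 1) * real (n - q) - real (p - 1) * real (q - p - 1)) * Dp (p,q))"
proof -
  have fQ: "finite Q"
    by (rule finite_subset[of _ "{..n} \<times> {..n} \<times> {..n} \<times> {..n}"]) (auto simp: Q_def)
  have fP: "finite P"
    by (rule finite_subset[of _ "{..n} \<times> {..n}"]) (auto simp: P_def)
  define p1 where "p1 = (\<lambda>(i::nat,j::nat,k::nat,l::nat). (i,j))"
  define p2 where "p2 = (\<lambda>(i::nat,j::nat,k::nat,l::nat). (i,k))"
  define p3 where "p3 = (\<lambda>(i::nat,j::nat,k::nat,l::nat). (i,l))"
  define p4 where "p4 = (\<lambda>(i::nat,j::nat,k::nat,l::nat). (j,k))"
  define p5 where "p5 = (\<lambda>(i::nat,j::nat,k::nat,l::nat). (j,l))"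
  define p6 where "p6 = (\<lambda>(i::nat,j::nat,k::nat,l::nat). (k,l))"
  have split: "(\<Sum>(i,j,k,l)\<in>Q. Dp (i,j) + Dp (i,l) + Dp (j,k) + Dp (k,l) - Dp (i,k) - Dp (j,l))
     = (\<Sum>s\<in>Q. Dp (p1 s)) + (\<Sum>s\<in>Q. Dp (p3 s)) + (\<Sum>s\<in>Q. Dp (p4 s)) + (\<Sum>s\<in>Q. Dp (p6 s))
       - (\<Sum>s\<in>Q. Dp (p2 s)) - (\<Sum>s\<in>Q. Dp (p5 s))"
    by (simp add: sum.distrib sum_subtractf p1_def p2_def p3_def p4_def p5_def p6_def case_prod_beta)
  have c1: "card {s\<in>Q. p1 s = (p,q)} = (n - q) choose 2" if "(p,q) \<in> P" for p q
  proof -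
    have "{s\<in>Q. p1 s = (p,q)} = (\<lambda>(k,l). (p,q,k,l)) ` {(k,l). q < k \<and> k < l \<and> l < Suc n}"
      using that by (auto simp: Q_def P_def p1_def image_iff)
    moreover have "inj_on (\<lambda>x::nat\<times>nat. (p,q,x)) X" for X by (auto simp: inj_on_def)
    ultimately show ?thesis by (simp add: card_image card_pairs)
  qed
  have c6: "card {s\<in>Q. p6 s = (p,q)} = (p - 1) choose 2" if "(p,q) \<in> P" for p q
  proof -
    have "{s\<in>Q. p6 s = (p,q)} = (\<lambda>(i,j). (i,j,p,q)) ` {(i,j). 0 < i \<and> i < j \<and> j < p}"
      using that by (auto simp: Q_def P_def p6_def image_iff)
    moreover have "inj_on (\<lambda>(i::nat,j::nat). (i,j,p,q)) X" for X by (auto simp: inj_on_def)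
    ultimately show ?thesis by (simp add: card_image card_pairs)
  qed
  have c3: "card {s\<in>Q. p3 s = (p,q)} = (q - p - 1) choose 2" if "(p,q) \<in> P" for p q
  proof -
    have "{s\<in>Q. p3 s = (p,q)} = (\<lambda>(j,k). (p,j,k,q)) ` {(j,k). p < j \<and> j < k \<and> k < q}"
      using that by (auto simp: Q_def P_def p3_def image_iff)
    moreover have "inj_on (\<lambda>(j::nat,k::nat). (p,j,k,q)) X" for X by (auto simp: inj_on_def)
    ultimately show ?thesis by (simp add: card_image card_pairs)
  qed
  have c4: "card {s\<in>Q. p4 s = (p,q)} = (p - 1) * (n - q)" if "(p,q) \<in> P" for p q
  proof -
    have "{s\<in>Q. p4 s = (p,q)} = (\<lambda>(i,l). (i,p,q,l)) ` ({1..<p} \<times> {q<..n})"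
      using that by (auto simp: Q_def P_def p4_def image_iff)
    moreover have "inj_on (\<lambda>(i::nat,l::nat). (i,p,q,l)) X" for X by (auto simp: inj_on_def)
    ultimately show ?thesis by (simp add: card_image card_cartesian_product)
  qed
  have c2: "card {s\<in>Q. p2 s = (p,q)} = (q - p - 1) * (n - q)" if "(p,q) \<in> P" for p q
  proof -
    have "{s\<in>Q. p2 s = (p,q)} = (\<lambda>(j,l). (p,j,q,l)) ` ({p<..<q} \<times> {q<..n})"
      using that by (auto simp: Q_def P_def p2_def image_iff)
    moreover have "inj_on (\<lambda>(j::nat,l::nat). (p,j,q,l)) X" for X by (auto simp: inj_on_def)
    ultimately show ?thesis by (simp add: card_image card_cartesian_product)
  qed
  have c5: "card {s\<in>Q. p5 s = (p,q)} = (p - 1) * (q - p - 1)" if "(p,q) \<in> P" for p q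
  proof -
    have "{s\<in>Q. p5 s = (p,q)} = (\<lambda>(i,k). (i,p,k,q)) ` ({1..<p} \<times> {p<..<q})"
      using that by (auto simp: Q_def P_def p5_def image_iff)
    moreover have "inj_on (\<lambda>(i::nat,k::nat). (i,p,k,q)) X" for X by (auto simp: inj_on_def)
    ultimately show ?thesis by (simp add: card_image card_cartesian_product)
  qed
  have im: "p1 ` Q \<subseteq> P" "p2 ` Q \<subseteq> P" "p3 ` Q \<subseteq> P" "p4 ` Q \<subseteq> P" "p5 ` Q \<subseteq> P" "p6 ` Q \<subseteq> P"
    by (auto simp: Q_def P_def p1_def p2_def p3_def p4_def p5_def p6_def)
  have r1: "(\<Sum>s\<in>Q. Dp (p1 s)) = (\<Sum>(p,q)\<in>P. real ((n - q) choose 2) * Dp (p,q))"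
    by (subst reindex[OF fQ fP im(1)], rule sum.cong) (auto simp: c1)
  have r2: "(\<Sum>s\<in>Q. Dp (p2 s)) = (\<Sum>(p,q)\<in>P. real (q - p - 1) * real (n - q) * Dp (p,q))"
    by (subst reindex[OF fQ fP im(2)], rule sum.cong) (auto simp: c2 simp del: of_nat_diff)
  have r3: "(\<Sum>s\<in>Q. Dp (p3 s)) = (\<Sum>(p,q)\<in>P. real ((q - p - 1) choose 2) * Dp (p,q))"
    by (subst reindex[OF fQ fP im(3)], rule sum.cong) (auto simp: c3)
  have r4: "(\<Sum>s\<in>Q. Dp (p4 s)) = (\<Sum>(p,q)\<in>P. real (p - 1) * real (n - q) * Dp (p,q))"
    by (subst reindex[OF fQ fP im(4)], rule sum.cong) (auto simp: c4 simp del: of_nat_diff)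
  have r5: "(\<Sum>s\<in>Q. Dp (p5 s)) = (\<Sum>(p,q)\<in>P. real (p - 1) * real (q - p - 1) * Dp (p,q))"
    by (subst reindex[OF fQ fP im(5)], rule sum.cong) (auto simp: c5 simp del: of_nat_diff)
  have r6: "(\<Sum>s\<in>Q. Dp (p6 s)) = (\<Sum>(p,q)\<in>P. real ((p - 1) choose 2) * Dp (p,q))"
    by (subst reindex[OF fQ fP im(6)], rule sum.cong) (auto simp: c6)
  show ?thesis
    unfolding split r1 r2 r3 r4 r5 r6
    apply (simp add: sum.distrib[symmetric] sum_subtractf[symmetric] case_prod_beta ring_distribs del: of_nat_diff)
    apply (rule sum.cong; simp del: of_nat_diff)
    done
qed


theorem theorem3p2:
  fixes n :: nat and x :: "nat \<Rightarrow> 'a::real_inner"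
  assumes "n \<ge> 4"
  shows "real ((n - 2) choose 2) * (\<Sum>i = 1..n. (norm (x i - x (if i = n then 1 else i + 1)))\<^sup>2)
    = (\<Sum>(i, j) \<in> {(i, j). 1 \<le> i \<and> i < j \<and> j \<le> n \<and> 1 < j - i \<and> j - i < n - 1}.
          of_int (coef_c n i j) * (norm (x i - x j))\<^sup>2)
      + (\<Sum>(i, j, k, l) \<in> {(i, j, k, l). 1 \<le> i \<and> i < j \<and> j < k \<and> k < l \<and> l \<le> n}.
          (norm (x i - x j + x k - x l))\<^sup>2)"
proof -
  define Dp where "Dp = (\<lambda>t. (norm (x (fst t) - x (snd t)))\<^sup>2)"
  define P where "P = {(i, j). 1 \<le> i \<and> i < j \<and> j \<le> n}"
  define NA where "NA = {(i, j). 1 \<le> i \<and> i < j \<and> j \<le> n \<and> 1 < j - i \<and> j - i < n - 1}"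
  define Q where "Q = {(i, j, k, l). 1 \<le> i \<and> i < j \<and> j < k \<and> k < l \<and> l \<le> n}"
  define nx where "nx = (\<lambda>i. if i = n then (1::nat, n) else (i, i + 1))"
  define ind where "ind = (\<lambda>(p,q). if q = p + 1 \<or> (p = 1 \<and> q = n) then (1::real) else 0)"
  have fP: "finite P"
    by (rule finite_subset[of _ "{..n} \<times> {..n}"]) (auto simp: P_def)
  have NAP: "NA \<subseteq> P" by (auto simp: NA_def P_def)
  have L1: "(\<Sum>i = 1..n. (norm (x i - x (if i = n then 1 else i + 1)))\<^sup>2) = (\<Sum>i\<in>{1..n}. Dp (nx i))"
    by (rule sum.cong) (auto simp: Dp_def nx_def norm_minus_commute)
  have imnx: "nx ` {1..n} \<subseteq> P" using assms by (auto simp: nx_def P_def)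
  have cnx: "card {i\<in>{1..n}. nx i = (p,q)} = ind (p,q)" if "(p,q) \<in> P" for p q
  proof -
    consider "q = p + 1" | "p = 1 \<and> q = n" | "\<not> (q = p + 1) \<and> \<not> (p = 1 \<and> q = n)" by blast
    then show ?thesis
    proof cases
      case 1
      have e: "{i\<in>{1..n}. nx i = (p,q)} = {p}" using 1 that assms by (auto simp: nx_def P_def)
      have "ind (p,q) = 1" using 1 by (simp add: ind_def)
      then show ?thesis unfolding e by simp
    next
      case 2
      have e: "{i\<in>{1..n}. nx i = (p,q)} = {n}" using 2 that assms by (auto simp: nx_def P_def)
      have "ind (p,q) = 1" using 2 by (simp add: ind_def)
      then show ?thesis unfolding e by simp
    next
      case 3
      have e: "{i\<in>{1..n}. nx i = (p,q)} = {}" using 3 that assms by (auto simp: nx_def P_def)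
      have "ind (p,q) = 0" using 3 by (simp add: ind_def)
      then show ?thesis unfolding e by simp
    qed
  qed
  have L: "(\<Sum>i = 1..n. (norm (x i - x (if i = n then 1 else i + 1)))\<^sup>2) = (\<Sum>t\<in>P. ind t * Dp t)"
  proof -
    have "(\<Sum>i\<in>{1..n}. Dp (nx i)) = (\<Sum>t\<in>P. real (card {i\<in>{1..n}. nx i = t}) * Dp t)"
      by (rule reindex[OF _ fP imnx]) simp
    also have "\<dots> = (\<Sum>t\<in>P. ind t * Dp t)"
    proof (rule sum.cong[OF refl])
      fix t assume "t \<in> P"
      then obtain p q where "t = (p,q)" "(p,q) \<in> P" by (cases t) auto
      then show "real (card {i\<in>{1..n}. nx i = t}) * Dp t = ind t * Dp t"
        using cnx[of p q] by simp
    qed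
    finally show ?thesis unfolding L1 .
  qed
  have R1: "(\<Sum>(i, j) \<in> NA. of_int (coef_c n i j) * (norm (x i - x j))\<^sup>2)
     = (\<Sum>t\<in>P. (if t \<in> NA then of_int (coef_c n (fst t) (snd t)) else 0) * Dp t)"
  proof -
    have "(\<Sum>(i, j) \<in> NA. of_int (coef_c n i j) * (norm (x i - x j))\<^sup>2)
       = (\<Sum>t\<in>P \<inter> NA. of_int (coef_c n (fst t) (snd t)) * Dp t)"
      using NAP by (simp add: Int_absorb1 case_prod_beta Dp_def)
    also have "\<dots> = (\<Sum>t\<in>P. (if t \<in> NA then of_int (coef_c n (fst t) (snd t)) * Dp t else 0))"
      by (rule sum.inter_restrict[OF fP])
    also have "\<dots> = (\<Sum>t\<in>P. (if t \<in> NA then of_int (coef_c n (fst t) (snd t)) else 0) * Dp t)"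
      by (rule sum.cong) auto
    finally show ?thesis .
  qed
  have R2: "(\<Sum>(i, j, k, l) \<in> Q. (norm (x i - x j + x k - x l))\<^sup>2)
    = (\<Sum>(p,q)\<in>P. (real ((n - q) choose 2) + real ((p - 1) choose 2) + real ((q - p - 1) choose 2)
         + real (p - 1) * real (n - q) - real (q - p - 1) * real (n - q) - real (p - 1) * real (q - p - 1)) * Dp (p,q))"
  proof -
    have "(\<Sum>(i, j, k, l) \<in> Q. (norm (x i - x j + x k - x l))\<^sup>2)
      = (\<Sum>(i,j,k,l)\<in>Q. Dp (i,j) + Dp (i,l) + Dp (j,k) + Dp (k,l) - Dp (i,k) - Dp (j,l))"
      by (rule sum.cong) (auto simp: Dp_def norm4)
    also have "\<dots> = (\<Sum>(p,q)\<in>P. (real ((n - q) choose 2) + real ((p - 1) choose 2) + real ((q - p - 1) choose 2)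
         + real (p - 1) * real (n - q) - real (q - p - 1) * real (n - q) - real (p - 1) * real (q - p - 1)) * Dp (p,q))"
      using quad_sum[of Dp n] by (simp add: Q_def P_def)
    finally show ?thesis .
  qed
  have C: "real ((n - 2) choose 2) * ind t
     = (if t \<in> NA then of_int (coef_c n (fst t) (snd t)) else 0)
       + (real ((n - snd t) choose 2) + real ((fst t - 1) choose 2) + real ((snd t - fst t - 1) choose 2)
         + real (fst t - 1) * real (n - snd t) - real (snd t - fst t - 1) * real (n - snd t)
         - real (fst t - 1) * real (snd t - fst t - 1))" if "t \<in> P" for t
  proof -
    obtain p q where t: "t = (p,q)" "1 \<le> p" "p < q" "q \<le> n" using \<open>t \<in> P\<close> by (auto simp: P_def)
    obtain A g B where e: "p = A + 1" "q = A + g + 2" "n = A + g + B + 2"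
      using t by (intro that[of "p - 1" "q - p - 1" "n - q"]) auto
    have ge2: "A + B + g \<ge> 2" using assms e by simp
    have h: "n - 2 = A + B + g" "n - q = B" "p - 1 = A" "q - p - 1 = g" "n - q + p - 1 = A + B"
      using e by auto
    have hi: "ind (p,q) = (if g = 0 \<or> (A = 0 \<and> B = 0) then 1 else 0)"
      using e by (auto simp: ind_def)
    have hn: "((p,q) \<in> NA) = (0 < g \<and> 0 < A + B)"
      using e by (auto simp: NA_def)
    have hc: "coef_c n p q = - int ((A+B) choose 2) + int (A+B) * int g - int (g choose 2)"
      unfolding coef h(5) h(4) ..
    from pointwise[OF ge2] show ?thesis
      unfolding t fst_conv snd_conv h hi hn hc by simp
  qed
  have "real ((n - 2) choose 2) * (\<Sum>t\<in>P. ind t * Dp t)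
     = (\<Sum>t\<in>P. (if t \<in> NA then of_int (coef_c n (fst t) (snd t)) else 0) * Dp t)
       + (\<Sum>(p,q)\<in>P. (real ((n - q) choose 2) + real ((p - 1) choose 2) + real ((q - p - 1) choose 2)
         + real (p - 1) * real (n - q) - real (q - p - 1) * real (n - q) - real (p - 1) * real (q - p - 1)) * Dp (p,q))"
    unfolding sum_distrib_left sum.distrib[symmetric]
  proof (rule sum.cong[OF refl])
    fix t assume t: "t \<in> P"
    have "real ((n - 2) choose 2) * (ind t * Dp t) = (real ((n - 2) choose 2) * ind t) * Dp t"
      by (simp only: mult.assoc)
    also have "\<dots> = ((if t \<in> NA then of_int (coef_c n (fst t) (snd t)) else 0)
       + (real ((n - snd t) choose 2) + real ((fst t - 1) choose 2) + real ((snd t - fst t - 1) choose 2)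
         + real (fst t - 1) * real (n - snd t) - real (snd t - fst t - 1) * real (n - snd t)
         - real (fst t - 1) * real (snd t - fst t - 1))) * Dp t"
      unfolding C[OF t] ..
    finally show "real ((n - 2) choose 2) * (ind t * Dp t) =
      (if t \<in> NA then of_int (coef_c n (fst t) (snd t)) else 0) * Dp t +
      (case t of (p,q) \<Rightarrow> (real ((n - q) choose 2) + real ((p - 1) choose 2) + real ((q - p - 1) choose 2)
         + real (p - 1) * real (n - q) - real (q - p - 1) * real (n - q) - real (p - 1) * real (q - p - 1)) * Dp (p,q))"
      by (simp only: case_prod_beta prod.collapse distrib_right)
  qed
  then show ?thesis
    unfolding L NA_def[symmetric] Q_def[symmetric] R1 R2 .
qed

end
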